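(* Let $X,Y$ be Hausdorff spaces with continuous $k$-means $\mu$ on $X$ and $\nu$ on $Y$, and let $g:X\to Y$ be a continuous $k$-mean homomorphism. (i) If $\mu$ and $\nu$ $\beta$-extend to $(k+1)$-means $\tilde\mu$ and $\tilde\nu$ respectively, then $g$ is a $(k+1)$-mean homomorphism from $(X,\tilde\mu)$ to $(Y,\tilde\nu)$. (ii) If $g$ is surjective and $\mu$ $\beta$-extends to a $(k+1)$-mean $\tilde\mu$, then $\nu$ $\beta$-extends to a $(k+1)$-mean $\tilde\nu$, and $g$ is then a $(k+1)$-mean homomorphism from $(X,\tilde\mu)$ to $(Y,\tilde\nu)$.
   Context: A $k$-mean is a map $\mu:X^k\to X$ with $\mu(x,\ldots,x)=x$. A map $g:X\to Y$ is a $k$-mean homomorphism from $(X,\mu)$ to $(Y,\nu)$ if $g\circ\mu=\nu\circ g_k$, where $g_k(x_1,\ldots,x_k)=(g(x_1),\ldots,g(x_k))$. Barycentric operator of a $k$-mean $\mu$: $\beta_\mu(\mathbf{x})_j=\mu(x_1,\ldots,\widehat{x_j},\ldots,x_{k+1})$ on $X^{k+1}$; a $(k+1)$-mean $\tilde\mu$ is a $\beta$-extension of $\mu$ if $\beta_\mu^n(\mathbf{x})\to(\tilde\mu(\mathbf{x}),\ldots,\tilde\mu(\mathbf{x}))$ for every $\mathbf{x}\in X^{k+1}$. *)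

theory Defs
  imports "HOL-Analysis.Analysis"
begin

text \<open>Tuples in X^k are extensional functions on the index set {..<k}
  (elements of PiE {..<k} (\<lambda>_. topspace X)); X^k carries the product topology.\<close>

definition kmean :: "'a topology \<Rightarrow> nat \<Rightarrow> ((nat \<Rightarrow> 'a) \<Rightarrow> 'a) \<Rightarrow> bool" where
  "kmean X k \<mu> \<longleftrightarrow>
     (\<forall>x\<in>PiE {..<k} (\<lambda>_. topspace X). \<mu> x \<in> topspace X) \<and>
     (\<forall>x\<in>topspace X. \<mu> (\<lambda>i\<in>{..<k}. x) = x)"

definition kmean_hom ::
  "'a topology \<Rightarrow> 'b topology \<Rightarrow> nat \<Rightarrow> ((nat \<Rightarrow> 'a) \<Rightarrow> 'a) \<Rightarrow> ((nat \<Rightarrow> 'b) \<Rightarrow> 'b)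
     \<Rightarrow> ('a \<Rightarrow> 'b) \<Rightarrow> bool" where
  "kmean_hom X Y k \<mu> \<nu> g \<longleftrightarrow>
     (\<forall>x\<in>topspace X. g x \<in> topspace Y) \<and>
     (\<forall>x\<in>PiE {..<k} (\<lambda>_. topspace X). g (\<mu> x) = \<nu> (\<lambda>i\<in>{..<k}. g (x i)))"

text \<open>Barycentric operator: the j-th coordinate is \<mu> applied to x with the j-th entry removed.\<close>
definition barycentric :: "nat \<Rightarrow> ((nat \<Rightarrow> 'a) \<Rightarrow> 'a) \<Rightarrow> (nat \<Rightarrow> 'a) \<Rightarrow> (nat \<Rightarrow> 'a)" where
  "barycentric k \<mu> x =
     (\<lambda>j\<in>{..<Suc k}. \<mu> (\<lambda>i\<in>{..<k}. if i < j then x i else x (Suc i)))"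

definition beta_extension ::
  "'a topology \<Rightarrow> nat \<Rightarrow> ((nat \<Rightarrow> 'a) \<Rightarrow> 'a) \<Rightarrow> ((nat \<Rightarrow> 'a) \<Rightarrow> 'a) \<Rightarrow> bool" where
  "beta_extension X k \<mu> \<mu>' \<longleftrightarrow>
     kmean X (Suc k) \<mu>' \<and>
     (\<forall>x\<in>PiE {..<Suc k} (\<lambda>_. topspace X).
        limitin (product_topology (\<lambda>_. X) {..<Suc k})
          (\<lambda>n. (barycentric k \<mu> ^^ n) x) (\<lambda>j\<in>{..<Suc k}. \<mu>' x) sequentially)"

end

theory Submission
  imports Defs
begin

definition tmap :: "nat \<Rightarrow> ('a \<Rightarrow> 'b) \<Rightarrow> (nat \<Rightarrow> 'a) \<Rightarrow> (nat \<Rightarrow> 'b)" where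
  "tmap m g x = (\<lambda>j\<in>{..<m}. g (x j))"

lemma bary_PiE:
  assumes "kmean X k \<mu>" "x \<in> PiE {..<Suc k} (\<lambda>_. topspace X)"
  shows "barycentric k \<mu> x \<in> PiE {..<Suc k} (\<lambda>_. topspace X)"
proof -
  have "\<mu> (\<lambda>i\<in>{..<k}. if i < j then x i else x (Suc i)) \<in> topspace X" if "j < Suc k" for j
    using assms unfolding kmean_def by (auto simp: PiE_iff)
  then show ?thesis unfolding barycentric_def by auto
qed

lemma bary_iter_PiE:
  assumes "kmean X k \<mu>" "x \<in> PiE {..<Suc k} (\<lambda>_. topspace X)"
  shows "(barycentric k \<mu> ^^ n) x \<in> PiE {..<Suc k} (\<lambda>_. topspace X)"
  by (induction n) (auto simp: assms bary_PiE)

lemma bary_const: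
  assumes "kmean X k \<mu>" "y \<in> topspace X"
  shows "barycentric k \<mu> (\<lambda>j\<in>{..<Suc k}. y) = (\<lambda>j\<in>{..<Suc k}. y)"
proof -
  have "(\<lambda>i\<in>{..<k}. if i < j then (\<lambda>j\<in>{..<Suc k}. y) i else (\<lambda>j\<in>{..<Suc k}. y) (Suc i))
      = (\<lambda>i\<in>{..<k}. y)" for j
    by (rule ext) auto
  then show ?thesis using assms unfolding barycentric_def kmean_def by auto
qed

lemma bary_iter_const:
  assumes "kmean X k \<mu>" "y \<in> topspace X"
  shows "(barycentric k \<mu> ^^ n) (\<lambda>j\<in>{..<Suc k}. y) = (\<lambda>j\<in>{..<Suc k}. y)"
  by (induction n) (simp_all only: funpow.simps o_apply id_apply bary_const[OF assms])

lemma bary_hom: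
  assumes "kmean_hom X Y k \<mu> \<nu> g" "x \<in> PiE {..<Suc k} (\<lambda>_. topspace X)"
  shows "barycentric k \<nu> (tmap (Suc k) g x) = tmap (Suc k) g (barycentric k \<mu> x)"
proof -
  have "\<nu> (\<lambda>i\<in>{..<k}. if i < j then tmap (Suc k) g x i else tmap (Suc k) g x (Suc i))
     = g (\<mu> (\<lambda>i\<in>{..<k}. if i < j then x i else x (Suc i)))" if "j < Suc k" for j
  proof -
    let ?z = "\<lambda>i\<in>{..<k}. if i < j then x i else x (Suc i)"
    have z: "?z \<in> PiE {..<k} (\<lambda>_. topspace X)" using assms(2) by (auto simp: PiE_iff)
    have "(\<lambda>i\<in>{..<k}. if i < j then tmap (Suc k) g x i else tmap (Suc k) g x (Suc i))
        = (\<lambda>i\<in>{..<k}. g (?z i))"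
      by (rule ext) (auto simp: tmap_def)
    then show ?thesis using assms(1) z unfolding kmean_hom_def by auto
  qed
  then show ?thesis unfolding barycentric_def tmap_def by (auto intro!: ext)
qed

lemma tmap_PiE:
  assumes "continuous_map X Y g" "x \<in> PiE {..<m} (\<lambda>_. topspace X)"
  shows "tmap m g x \<in> PiE {..<m} (\<lambda>_. topspace Y)"
  using assms by (auto simp: tmap_def PiE_iff continuous_map_def)

lemma bary_iter_hom:
  assumes "kmean X k \<mu>" "kmean_hom X Y k \<mu> \<nu> g" "x \<in> PiE {..<Suc k} (\<lambda>_. topspace X)"
  shows "(barycentric k \<nu> ^^ n) (tmap (Suc k) g x) = tmap (Suc k) g ((barycentric k \<mu> ^^ n) x)"
proof (induction n)
  case (Suc n)
  show ?case using Suc bary_hom[OF assms(2) bary_iter_PiE[OF assms(1,3)]] by simp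
qed simp


lemma tmap_cont:
  assumes "continuous_map X Y g"
  shows "continuous_map (product_topology (\<lambda>_. X) {..<m}) (product_topology (\<lambda>_. Y) {..<m}) (tmap m g)"
  unfolding continuous_map_componentwise
proof (intro conjI ballI)
  show "tmap m g ` topspace (product_topology (\<lambda>_. X) {..<m}) \<subseteq> extensional {..<m}"
    by (auto simp: tmap_def)
  fix j assume j: "j \<in> {..<m}"
  have "continuous_map (product_topology (\<lambda>_. X) {..<m}) Y (g \<circ> (\<lambda>x. x j))"
    by (rule continuous_map_compose[OF continuous_map_product_projection[OF j] assms])
  then show "continuous_map (product_topology (\<lambda>_. X) {..<m}) Y (\<lambda>x. tmap m g x j)"
    using j by (simp add: tmap_def o_def)
qed

lemma limit0:
  assumes "limitin (product_topology (\<lambda>_. X) {..<Suc k}) f (\<lambda>j\<in>{..<Suc k}. c) sequentially"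
  shows "limitin X (\<lambda>n. f n 0) c sequentially"
  using continuous_map_limit[OF continuous_map_product_projection[of 0 "{..<Suc k}" "\<lambda>_. X"] assms]
  by (simp add: o_def)

lemma part1:
  assumes "Hausdorff_space Y" "kmean X k \<mu>" "continuous_map X Y g" "kmean_hom X Y k \<mu> \<nu> g"
    and b1: "beta_extension X k \<mu> \<mu>'" and b2: "beta_extension Y k \<nu> \<nu>'"
  shows "kmean_hom X Y (Suc k) \<mu>' \<nu>' g"
  unfolding kmean_hom_def
proof (intro conjI ballI)
  fix x assume "x \<in> topspace X" then show "g x \<in> topspace Y"
    using assms(3) by (auto simp: continuous_map_def)
next
  fix x assume x: "x \<in> PiE {..<Suc k} (\<lambda>_. topspace X)"
  have gx: "tmap (Suc k) g x \<in> PiE {..<Suc k} (\<lambda>_. topspace Y)" by (rule tmap_PiE[OF assms(3) x])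
  have L1: "limitin (product_topology (\<lambda>_. X) {..<Suc k}) (\<lambda>n. (barycentric k \<mu> ^^ n) x)
        (\<lambda>j\<in>{..<Suc k}. \<mu>' x) sequentially"
    using b1 x unfolding beta_extension_def by blast
  have "limitin X (\<lambda>n. (barycentric k \<mu> ^^ n) x 0) (\<mu>' x) sequentially" by (rule limit0[OF L1])
  from continuous_map_limit[OF assms(3) this]
  have A: "limitin Y (\<lambda>n. g ((barycentric k \<mu> ^^ n) x 0)) (g (\<mu>' x)) sequentially" by (simp add: o_def)
  have L2: "limitin (product_topology (\<lambda>_. Y) {..<Suc k}) (\<lambda>n. (barycentric k \<nu> ^^ n) (tmap (Suc k) g x))
        (\<lambda>j\<in>{..<Suc k}. \<nu>' (tmap (Suc k) g x)) sequentially"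
    using b2 gx unfolding beta_extension_def by blast
  have B: "limitin Y (\<lambda>n. g ((barycentric k \<mu> ^^ n) x 0)) (\<nu>' (tmap (Suc k) g x)) sequentially"
    using limit0[OF L2] bary_iter_hom[OF assms(2,4) x] by (simp add: tmap_def)
  have "g (\<mu>' x) = \<nu>' (tmap (Suc k) g x)"
    using limitin_Hausdorff_unique[OF A B _ assms(1)] by simp
  then show "g (\<mu>' x) = \<nu>' (\<lambda>i\<in>{..<Suc k}. g (x i))" by (simp add: tmap_def)
qed

lemma part2:
  assumes "Hausdorff_space Y" "kmean X k \<mu>" "kmean Y k \<nu>" "continuous_map X Y g" "kmean_hom X Y k \<mu> \<nu> g"
    and surj: "g ` topspace X = topspace Y" and b1: "beta_extension X k \<mu> \<mu>'"
  shows "\<exists>\<nu>'. beta_extension Y k \<nu> \<nu>'"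
proof -
  define pre where "pre y = (SOME x. x \<in> PiE {..<Suc k} (\<lambda>_. topspace X) \<and> tmap (Suc k) g x = y)" for y
  have pre: "pre y \<in> PiE {..<Suc k} (\<lambda>_. topspace X) \<and> tmap (Suc k) g (pre y) = y"
    if y: "y \<in> PiE {..<Suc k} (\<lambda>_. topspace Y)" for y
  proof -
    have ex: "\<forall>j\<in>{..<Suc k}. \<exists>a. a \<in> topspace X \<and> g a = y j"
    proof
      fix j assume "j \<in> {..<Suc k}"
      then have "y j \<in> g ` topspace X" using y surj by (auto simp: PiE_iff)
      then show "\<exists>a. a \<in> topspace X \<and> g a = y j" by (metis imageE)
    qed
    obtain h where h0: "\<forall>j\<in>{..<Suc k}. h j \<in> topspace X \<and> g (h j) = y j"
      using bchoice[OF ex] by blast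
    then have h: "\<And>j. j \<in> {..<Suc k} \<Longrightarrow> h j \<in> topspace X \<and> g (h j) = y j" by blast
    let ?x = "restrict h {..<Suc k}"
    have x1: "?x \<in> PiE {..<Suc k} (\<lambda>_. topspace X)"
      unfolding restrict_PiE_iff using h by blast
    have "tmap (Suc k) g ?x = restrict y {..<Suc k}"
      unfolding tmap_def by (intro restrict_ext) (simp add: h)
    also have "\<dots> = y" using y by (rule PiE_restrict)
    finally have "?x \<in> PiE {..<Suc k} (\<lambda>_. topspace X) \<and> tmap (Suc k) g ?x = y"
      using x1 by blast
    then show ?thesis unfolding pre_def by (rule someI[of "\<lambda>x. x \<in> PiE {..<Suc k} (\<lambda>_. topspace X) \<and> tmap (Suc k) g x = y"])
  qed
  define \<nu>' where "\<nu>' y = g (\<mu>' (pre y))" for y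
  have lim: "limitin (product_topology (\<lambda>_. Y) {..<Suc k}) (\<lambda>n. (barycentric k \<nu> ^^ n) y)
        (\<lambda>j\<in>{..<Suc k}. \<nu>' y) sequentially"
    if y: "y \<in> PiE {..<Suc k} (\<lambda>_. topspace Y)" for y
  proof -
    have px: "pre y \<in> PiE {..<Suc k} (\<lambda>_. topspace X)" and py: "tmap (Suc k) g (pre y) = y"
      using pre[OF y] by auto
    have L1: "limitin (product_topology (\<lambda>_. X) {..<Suc k}) (\<lambda>n. (barycentric k \<mu> ^^ n) (pre y))
        (\<lambda>j\<in>{..<Suc k}. \<mu>' (pre y)) sequentially"
      using b1 px unfolding beta_extension_def by blast
    from continuous_map_limit[OF tmap_cont[OF assms(4)] L1]
    have "limitin (product_topology (\<lambda>_. Y) {..<Suc k})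
        (\<lambda>n. tmap (Suc k) g ((barycentric k \<mu> ^^ n) (pre y)))
        (tmap (Suc k) g (\<lambda>j\<in>{..<Suc k}. \<mu>' (pre y))) sequentially" by (simp add: o_def)
    moreover have "tmap (Suc k) g (\<lambda>j\<in>{..<Suc k}. \<mu>' (pre y)) = (\<lambda>j\<in>{..<Suc k}. \<nu>' y)"
      unfolding tmap_def \<nu>'_def by (intro restrict_ext) simp
    ultimately show ?thesis
      using bary_iter_hom[OF assms(2,5) px] py by simp
  qed
  have km: "kmean Y (Suc k) \<nu>'"
    unfolding kmean_def
  proof (intro conjI ballI)
    fix y assume y: "y \<in> PiE {..<Suc k} (\<lambda>_. topspace Y)"
    have "kmean X (Suc k) \<mu>'" using b1 unfolding beta_extension_def by blast
    then have "\<mu>' (pre y) \<in> topspace X" using pre[OF y] unfolding kmean_def by blast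
    then show "\<nu>' y \<in> topspace Y" using assms(4) by (auto simp: \<nu>'_def continuous_map_def)
  next
    fix y assume y: "y \<in> topspace Y"
    let ?c = "\<lambda>i\<in>{..<Suc k}. y"
    have c: "?c \<in> PiE {..<Suc k} (\<lambda>_. topspace Y)" using y by auto
    have A: "limitin Y (\<lambda>n. (barycentric k \<nu> ^^ n) ?c 0) (\<nu>' ?c) sequentially"
      by (rule limit0[OF lim[OF c]])
    have B: "limitin Y (\<lambda>n. (barycentric k \<nu> ^^ n) ?c 0) y sequentially"
      using bary_iter_const[OF assms(3) y] y by simp
    show "\<nu>' ?c = y" using limitin_Hausdorff_unique[OF A B _ assms(1)] by simp
  qed
  show ?thesis apply (rule exI[of _ \<nu>']) unfolding beta_extension_def using km lim by blast
qed

theorem proposition7p2: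
  fixes X :: "'a topology" and Y :: "'b topology" and k :: nat
    and \<mu> :: "(nat \<Rightarrow> 'a) \<Rightarrow> 'a" and \<nu> :: "(nat \<Rightarrow> 'b) \<Rightarrow> 'b" and g :: "'a \<Rightarrow> 'b"
  assumes "Hausdorff_space X" and "Hausdorff_space Y"
    and "kmean X k \<mu>" and "continuous_map (product_topology (\<lambda>_. X) {..<k}) X \<mu>"
    and "kmean Y k \<nu>" and "continuous_map (product_topology (\<lambda>_. Y) {..<k}) Y \<nu>"
    and "continuous_map X Y g" and "kmean_hom X Y k \<mu> \<nu> g"
  shows "(\<forall>\<mu>' \<nu>'. beta_extension X k \<mu> \<mu>' \<and> beta_extension Y k \<nu> \<nu>'
            \<longrightarrow> kmean_hom X Y (Suc k) \<mu>' \<nu>' g)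
       \<and> (\<forall>\<mu>'. g ` topspace X = topspace Y \<and> beta_extension X k \<mu> \<mu>'
            \<longrightarrow> (\<exists>\<nu>'. beta_extension Y k \<nu> \<nu>' \<and> kmean_hom X Y (Suc k) \<mu>' \<nu>' g))"
proof (intro conjI allI impI)
  fix \<mu>' \<nu>' assume "beta_extension X k \<mu> \<mu>' \<and> beta_extension Y k \<nu> \<nu>'"
  then show "kmean_hom X Y (Suc k) \<mu>' \<nu>' g"
    using part1[OF assms(2,3,7,8)] by blast
next
  fix \<mu>' assume H: "g ` topspace X = topspace Y \<and> beta_extension X k \<mu> \<mu>'"
  then obtain \<nu>' where N: "beta_extension Y k \<nu> \<nu>'"
    using part2[OF assms(2,3,5,7,8)] by blast
  have "kmean_hom X Y (Suc k) \<mu>' \<nu>' g"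
    using part1[OF assms(2,3,7,8)] H N by blast
  then show "\<exists>\<nu>'. beta_extension Y k \<nu> \<nu>' \<and> kmean_hom X Y (Suc k) \<mu>' \<nu>' g"
    using N by blast
qed

end
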